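(* Let $\mathbf{V} \in \mathbb{R}^{n \times d}$ with rows $\mathbf{v}_1, \dots, \mathbf{v}_n \in \mathbb{R}^{d}$, and let $\mathbf{A} = \mathbf{V}\mathbf{V}^T$, so $A_{ij} = \mathbf{v}_i^T \mathbf{v}_j$. Consider the correlation clustering problem for $\mathbf{A}$: maximize $$\sum_{1 \le i<j \le n} A_{ij}\, \mathbf{x}_i^T \mathbf{x}_j$$ over all choices $\mathbf{x}_i \in \{\mathbf{e}_1, \dots, \mathbf{e}_n\}$ ($i=1,\dots,n$), where $\mathbf{e}_k$ is the $k$-th standard basis vector of $\mathbb{R}^n$ (equivalently, over all partitions of $\{1,\dots,n\}$ into clusters, where $\mathbf{x}_i$ indicates the cluster of $i$, maximize the sum of $A_{ij}$ over pairs $i<j$ in the same cluster). Then this problem can be solved by partitioning the row vectors $\mathbf{v}_1,\dots,\mathbf{v}_n$ into $d+1$ clusters $C_1, \dots, C_{d+1}$ (some possibly empty) so as to maximize $$\sum_{i=1}^{d+1} \|S_i\|_2^2, \qquad S_i = \sum_{\mathbf{v} \in C_i} \mathbf{v}.$$ That is, the maximum of this quantity over partitions into $d+1$ (possibly empty) clusters is attained, and any partition attaining it (with empty clusters discarded) is an optimal solution of the correlation clustering problem for $\mathbf{A}$.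
   Context: The vector $S_i$ is called the sum point of cluster $C_i$; the sum point of an empty cluster is the zero vector. Clusters are formed from the indices $1,\dots,n$ (equivalently, from the row vectors with multiplicity). *)

theory Defs
  imports "HOL-Analysis.Analysis"
begin

text \<open>Rows v 0, ..., v (n-1) of V (indices shifted to start at 0), living in real^'d,
  so d = CARD('d).  Gram matrix A = V V^T.\<close>
definition gram :: "(nat \<Rightarrow> real^'d) \<Rightarrow> nat \<Rightarrow> nat \<Rightarrow> real" where
  "gram v i j = inner (v i) (v j)"

text \<open>Correlation clustering: x i = k encodes x_i = e_k, k < n; then x_i^T x_j is 1 if
  x i = x j and 0 otherwise.\<close>
definition cc_feasible :: "nat \<Rightarrow> (nat \<Rightarrow> nat) \<Rightarrow> bool" where
  "cc_feasible n x \<longleftrightarrow> (\<forall>i<n. x i < n)"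

definition cc_obj :: "(nat \<Rightarrow> nat \<Rightarrow> real) \<Rightarrow> nat \<Rightarrow> (nat \<Rightarrow> nat) \<Rightarrow> real" where
  "cc_obj A n x = (\<Sum>j<n. \<Sum>i<j. A i j * (if x i = x j then 1 else 0))"

definition cc_optimal :: "(nat \<Rightarrow> nat \<Rightarrow> real) \<Rightarrow> nat \<Rightarrow> (nat \<Rightarrow> nat) \<Rightarrow> bool" where
  "cc_optimal A n x \<longleftrightarrow> cc_feasible n x \<and> (\<forall>y. cc_feasible n y \<longrightarrow> cc_obj A n y \<le> cc_obj A n x)"

definition sp_feasible :: "nat \<Rightarrow> nat \<Rightarrow> (nat \<Rightarrow> nat) \<Rightarrow> bool" where
  "sp_feasible n d c \<longleftrightarrow> (\<forall>i<n. c i \<le> d)"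

definition sum_point :: "(nat \<Rightarrow> real^'d) \<Rightarrow> nat \<Rightarrow> (nat \<Rightarrow> nat) \<Rightarrow> nat \<Rightarrow> real^'d" where
  "sum_point v n c k = (\<Sum>i\<in>{i. i < n \<and> c i = k}. v i)"

definition sp_obj :: "(nat \<Rightarrow> real^'d) \<Rightarrow> nat \<Rightarrow> (nat \<Rightarrow> nat) \<Rightarrow> real" where
  "sp_obj v n c = (\<Sum>k\<le>CARD('d). (norm (sum_point v n c k))\<^sup>2)"

definition sp_optimal :: "(nat \<Rightarrow> real^'d) \<Rightarrow> nat \<Rightarrow> (nat \<Rightarrow> nat) \<Rightarrow> bool" where
  "sp_optimal v n c \<longleftrightarrow> sp_feasible n CARD('d) c \<and>
     (\<forall>c'. sp_feasible n CARD('d) c' \<longrightarrow> sp_obj v n c' \<le> sp_obj v n c)"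

end

theory Submission
  imports Defs
begin

lemma neg_card:
  fixes U :: "(real^'d) set"
  assumes fin: "finite U" and neg: "\<And>u w. u \<in> U \<Longrightarrow> w \<in> U \<Longrightarrow> u \<noteq> w \<Longrightarrow> inner u w < 0"
  shows "card U \<le> CARD('d) + 1"
proof (rule ccontr)
  assume "\<not> ?thesis"
  hence big: "card U > CARD('d) + 1" by simp
  then obtain u0 where u0: "u0 \<in> U" by (metis card.empty not_less0 ex_in_conv)
  define U' where "U' = U - {u0}"
  have "card U' > DIM(real^'d)" using big u0 fin by (simp add: U'_def)
  hence "dependent U'" using dependent_biggerset by blast
  then obtain t u where t: "finite t" "t \<subseteq> U'" "(\<Sum>w\<in>t. u w *\<^sub>R w) = 0" "\<exists>w\<in>t. u w \<noteq> 0"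
    unfolding dependent_explicit by blast
  define P where "P = {w\<in>t. u w > 0}"
  define N where "N = {w\<in>t. u w < 0}"
  have fP: "finite P" "finite N" using t by (auto simp: P_def N_def)
  have split: "(\<Sum>w\<in>t. u w *\<^sub>R w) = (\<Sum>w\<in>P. u w *\<^sub>R w) + (\<Sum>w\<in>N. u w *\<^sub>R w)"
  proof -
    have "(\<Sum>w\<in>t. u w *\<^sub>R w) = (\<Sum>w\<in>P \<union> N \<union> {w\<in>t. u w = 0}. u w *\<^sub>R w)"
      by (rule sum.cong) (auto simp: P_def N_def)
    also have "\<dots> = (\<Sum>w\<in>P \<union> N. u w *\<^sub>R w) + (\<Sum>w\<in>{w\<in>t. u w = 0}. u w *\<^sub>R w)"
      by (rule sum.union_disjoint) (use t in \<open>auto simp: P_def N_def\<close>)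
    also have "\<dots> = (\<Sum>w\<in>P \<union> N. u w *\<^sub>R w)" by simp
    also have "\<dots> = (\<Sum>w\<in>P. u w *\<^sub>R w) + (\<Sum>w\<in>N. u w *\<^sub>R w)"
      by (rule sum.union_disjoint) (use fP in \<open>auto simp: P_def N_def\<close>)
    finally show ?thesis .
  qed
  define W where "W = (\<Sum>w\<in>P. u w *\<^sub>R w)"
  have W2: "W = (\<Sum>w\<in>N. (- u w) *\<^sub>R w)"
    using split t(3) by (simp add: W_def sum_negf eq_neg_iff_add_eq_0)
  have PU: "P \<subseteq> U'" "N \<subseteq> U'" using t by (auto simp: P_def N_def)
  have "inner W W = inner (\<Sum>w\<in>P. u w *\<^sub>R w) (\<Sum>w\<in>N. (- u w) *\<^sub>R w)"
    using W2 W_def by metis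
  also have "\<dots> = (\<Sum>p\<in>P. \<Sum>q\<in>N. (u p * (- u q)) * inner p q)"
    by (simp add: inner_sum_left inner_sum_right sum_distrib_left mult.assoc sum_negf inner_commute mult.left_commute sum.swap[of _ N P])
  also have "\<dots> \<le> 0"
  proof (intro sum_nonpos)
    fix p q assume "p \<in> P" "q \<in> N"
    hence "p \<noteq> q" "p \<in> U" "q \<in> U" "u p > 0" "- u q > 0" using PU by (auto simp: P_def N_def U'_def)
    hence "inner p q < 0" using neg by blast
    thus "u p * - u q * inner p q \<le> 0"
      using \<open>u p > 0\<close> \<open>- u q > 0\<close> by (metis mult_pos_pos mult_pos_neg less_imp_le)
  qed
  finally have "W = 0" by (metis inner_ge_zero inner_eq_zero_iff order_antisym)
  have Pe: "P = {}"
  proof (rule ccontr)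
    assume "P \<noteq> {}"
    have "inner W u0 = (\<Sum>p\<in>P. u p * inner p u0)" by (simp add: W_def inner_sum_left)
    also have "\<dots> < (\<Sum>p\<in>P. 0)"
    proof (rule sum_strict_mono)
      fix p assume "p \<in> P"
      hence "p \<noteq> u0" "p \<in> U" "u p > 0" using PU by (auto simp: P_def U'_def)
      hence "inner p u0 < 0" using neg u0 by blast
      thus "u p * inner p u0 < 0" using \<open>u p > 0\<close> by (simp add: mult_pos_neg)
    qed (use fP \<open>P \<noteq> {}\<close> in auto)
    finally show False using \<open>W = 0\<close> by simp
  qed
  have Ne: "N = {}"
  proof (rule ccontr)
    assume "N \<noteq> {}"
    have "inner W u0 = (\<Sum>p\<in>N. (- u p) * inner p u0)" by (simp add: W2 inner_sum_left)
    also have "\<dots> < (\<Sum>p\<in>N. 0)"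
    proof (rule sum_strict_mono)
      fix p assume "p \<in> N"
      hence "p \<noteq> u0" "p \<in> U" "- u p > 0" using PU by (auto simp: N_def U'_def)
      hence "inner p u0 < 0" using neg u0 by blast
      thus "(- u p) * inner p u0 < 0" using \<open>- u p > 0\<close> by (metis mult_pos_neg)
    qed (use fP \<open>N \<noteq> {}\<close> in auto)
    finally show False using \<open>W = 0\<close> by simp
  qed
  obtain w where "w \<in> t" "u w \<noteq> 0" using t by blast
  hence "w \<in> P \<or> w \<in> N" by (auto simp: P_def N_def)
  thus False using Pe Ne by blast
qed



definition FF :: "(nat \<Rightarrow> real^'d) \<Rightarrow> nat \<Rightarrow> (nat \<Rightarrow> nat) \<Rightarrow> real" where
  "FF v n c = (\<Sum>i<n. \<Sum>j<n. if c i = c j then inner (v i) (v j) else 0)"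

lemma sum_point_alt: "sum_point v n c k = (\<Sum>i<n. if c i = k then v i else 0)"
  unfolding sum_point_def by (simp add: sum.If_cases lessThan_def Collect_conj_eq Int_commute)

lemma sumF:
  assumes "finite K" "\<forall>i<n. c i \<in> K"
  shows "(\<Sum>k\<in>K. (norm (sum_point v n c k))\<^sup>2) = FF v n c"
proof -
  have "(\<Sum>k\<in>K. (norm (sum_point v n c k))\<^sup>2)
      = (\<Sum>k\<in>K. \<Sum>i<n. \<Sum>j<n. if c i = k \<and> c j = k then inner (v i) (v j) else 0)"
    unfolding power2_norm_eq_inner sum_point_alt inner_sum_left inner_sum_right
    by (intro sum.cong refl) (auto simp: inner_commute)
  also have "\<dots> = (\<Sum>i<n. \<Sum>j<n. \<Sum>k\<in>K. if c i = k \<and> c j = k then inner (v i) (v j) else 0)"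
    by (simp add: sum.swap[of _ K])
  also have "\<dots> = FF v n c"
    unfolding FF_def
  proof (intro sum.cong refl)
    fix i j assume "i \<in> {..<n}" "j \<in> {..<n}"
    hence "c i \<in> K" using assms by auto
    thus "(\<Sum>k\<in>K. if c i = k \<and> c j = k then inner (v i) (v j) else 0) = (if c i = c j then inner (v i) (v j) else 0)"
      using assms(1) by (simp add: sum.delta conj_commute[of "c i = _"] eq_commute[of "c i"] cong: conj_cong)
  qed
  finally show ?thesis .
qed

lemma FF_cc: "FF v n c = (\<Sum>i<n. inner (v i) (v i)) + 2 * cc_obj (gram v) n c"
proof (induction n)
  case 0 thus ?case by (simp add: FF_def cc_obj_def)
next
  case (Suc n)
  have "FF v (Suc n) c = FF v n c + (\<Sum>j<n. if c n = c j then inner (v n) (v j) else 0) + (\<Sum>i<n. if c i = c n then inner (v i) (v n) else 0) + inner (v n) (v n)"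
    unfolding FF_def by (simp add: sum.distrib)
  also have "(\<Sum>j<n. if c n = c j then inner (v n) (v j) else 0) = (\<Sum>i<n. if c i = c n then inner (v i) (v n) else 0)"
    by (intro sum.cong refl) (auto simp: inner_commute)
  finally have "FF v (Suc n) c = FF v n c + 2 * (\<Sum>i<n. if c i = c n then inner (v i) (v n) else 0) + inner (v n) (v n)"
    by simp
  thus ?case using Suc by (simp add: cc_obj_def gram_def algebra_simps if_distrib cong: if_cong)
qed

lemma cc_eq:
  assumes "\<forall>i<n. \<forall>j<n. x i = x j \<longleftrightarrow> c i = c j"
  shows "cc_obj A n x = cc_obj A n c"
  unfolding cc_obj_def by (intro sum.cong refl) (use assms in auto)

lemma sp_cc:
  fixes v :: "nat \<Rightarrow> real^'d"
  assumes "sp_feasible n CARD('d) c"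
  shows "sp_obj v n c = (\<Sum>i<n. inner (v i) (v i)) + 2 * cc_obj (gram v) n c"
  unfolding sp_obj_def using assms
  by (subst sumF) (auto simp: sp_feasible_def FF_cc)

lemma merge:
  fixes v :: "nat \<Rightarrow> real^'d"
  assumes "a \<in> y ` {..<n}" "b \<in> y ` {..<n}" "a \<noteq> b"
  shows "cc_obj (gram v) n (\<lambda>i. if y i = b then a else y i)
       = cc_obj (gram v) n y + inner (sum_point v n y a) (sum_point v n y b)"
proof -
  define m where "m = (\<lambda>i. if y i = b then a else (y i :: nat))"
  define K where "K = y ` {..<n}"
  define S where "S = sum_point v n y"
  have fK: "finite K" by (simp add: K_def)
  have mK: "\<forall>i<n. m i \<in> K" using assms by (auto simp: m_def K_def)
  have yK: "\<forall>i<n. y i \<in> K" by (auto simp: K_def)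
  have aK: "a \<in> K" and bK: "b \<in> K - {a}" using assms by (auto simp: K_def)
  have Sa: "sum_point v n m a = S a + S b"
    unfolding S_def sum_point_alt m_def using assms(3)
    by (simp add: sum.distrib[symmetric]) (intro sum.cong refl, auto)
  have Sb: "sum_point v n m b = 0"
    unfolding sum_point_alt m_def using assms(3) by (intro sum.neutral) auto
  have Sk: "sum_point v n m k = S k" if "k \<in> K - {a} - {b}" for k
    unfolding S_def sum_point_alt m_def using that by (intro sum.cong refl) auto
  have "FF v n m = (\<Sum>k\<in>K. (norm (sum_point v n m k))\<^sup>2)" using sumF[OF fK mK, of v] by simp
  also have "\<dots> = (norm (S a + S b))\<^sup>2 + 0 + (\<Sum>k\<in>K - {a} - {b}. (norm (S k))\<^sup>2)"
    using fK aK bK by (simp add: sum.remove[of K a] sum.remove[of "K - {a}" b] Sa Sb Sk)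
  also have "\<dots> = 2 * inner (S a) (S b) + ((norm (S a))\<^sup>2 + (norm (S b))\<^sup>2 + (\<Sum>k\<in>K - {a} - {b}. (norm (S k))\<^sup>2))"
    by (simp add: power2_norm_eq_inner inner_add_left inner_add_right inner_commute)
  also have "(norm (S a))\<^sup>2 + (norm (S b))\<^sup>2 + (\<Sum>k\<in>K - {a} - {b}. (norm (S k))\<^sup>2) = (\<Sum>k\<in>K. (norm (S k))\<^sup>2)"
    using fK aK bK by (simp add: sum.remove[of K a] sum.remove[of "K - {a}" b])
  also have "\<dots> = FF v n y" using sumF[OF fK yK, of v] by (simp add: S_def)
  finally show ?thesis unfolding m_def[symmetric] S_def using FF_cc[of v n m] FF_cc[of v n y] by simp
qed

lemma M:
  fixes v :: "nat \<Rightarrow> real^'d"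
  shows "\<exists>c. sp_feasible n CARD('d) c \<and> cc_obj (gram v) n y \<le> cc_obj (gram v) n c"
proof (induction "card (y ` {..<n})" arbitrary: y rule: less_induct)
  case less
  define L where "L = y ` {..<n}"
  have fL: "finite L" by (simp add: L_def)
  show ?case
  proof (cases "card L \<le> CARD('d) + 1")
    case True
    obtain h where h: "bij_betw h L {0..<card L}" using ex_bij_betw_finite_nat[OF fL] by blast
    define c where "c = h \<circ> y"
    have feas: "sp_feasible n CARD('d) c"
      unfolding sp_feasible_def c_def
    proof (intro allI impI)
      fix i assume "i < n"
      hence "h (y i) \<in> {0..<card L}" using h by (auto simp: L_def bij_betw_def)
      thus "(h \<circ> y) i \<le> CARD('d)" using True by simp
    qed
    have "\<forall>i<n. \<forall>j<n. c i = c j \<longleftrightarrow> y i = y j"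
      using h unfolding bij_betw_def inj_on_def c_def L_def by auto
    hence "cc_obj (gram v) n c = cc_obj (gram v) n y" by (rule cc_eq)
    thus ?thesis using feas by auto
  next
    case False
    define S where "S = sum_point v n y"
    have "\<exists>a\<in>L. \<exists>b\<in>L. a \<noteq> b \<and> cc_obj (gram v) n y \<le> cc_obj (gram v) n (\<lambda>i. if y i = b then a else y i)"
    proof (rule ccontr)
      assume na: "\<not> ?thesis"
      have neg: "inner (S a) (S b) < 0" if "a \<in> L" "b \<in> L" "a \<noteq> b" for a b
        using na that merge[of a y n b v] by (force simp: L_def S_def)
      have inj: "inj_on S L"
      proof (rule inj_onI, rule ccontr)
        fix a b assume "a \<in> L" "b \<in> L" "S a = S b" "a \<noteq> b"
        thus False using neg[of a b] inner_ge_zero[of "S b"] by simp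
      qed
      have "card (S ` L) \<le> CARD('d) + 1"
        by (rule neg_card) (use fL neg in auto)
      thus False using False card_image[OF inj] by simp
    qed
    then obtain a b where ab: "a \<in> L" "b \<in> L" "a \<noteq> b"
      and le: "cc_obj (gram v) n y \<le> cc_obj (gram v) n (\<lambda>i. if y i = b then a else y i)" by blast
    define m where "m = (\<lambda>i. if y i = b then a else (y i :: nat))"
    have "m ` {..<n} = L - {b}"
      using ab by (auto simp: m_def L_def image_iff) 
    hence "card (m ` {..<n}) < card (y ` {..<n})"
      using ab fL card_Diff1_less[OF fL ab(2)] by (simp only: L_def)
    then obtain c where "sp_feasible n CARD('d) c" "cc_obj (gram v) n m \<le> cc_obj (gram v) n c"
      using less by blast
    thus ?thesis using le by (auto simp: m_def)
  qed
qed

lemma sp_obj_restrict: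
  "sp_obj v n (\<lambda>i. if i < n then c i else 0) = sp_obj v n c"
proof -
  have "sum_point v n (\<lambda>i. if i < n then c i else 0) k = sum_point v n c k" for k
    unfolding sum_point_def by (rule arg_cong[where f="sum v"]) auto
  thus ?thesis by (simp add: sp_obj_def)
qed

theorem theorem1:
  fixes v :: "nat \<Rightarrow> real^'d" and n :: nat
  shows "(\<exists>c. sp_optimal v n c) \<and>
    (\<forall>c. sp_optimal v n c \<longrightarrow>
       (\<exists>x. cc_optimal (gram v) n x \<and> (\<forall>i<n. \<forall>j<n. x i = x j \<longleftrightarrow> c i = c j)))"
proof
  define R where "R = {f. \<forall>x. (x \<in> {..<n} \<longrightarrow> f x \<in> {..CARD('d)}) \<and> (x \<notin> {..<n} \<longrightarrow> f x = (0::nat))}"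
  have fR: "finite R" unfolding R_def by (rule finite_set_of_finite_funs) auto
  have "(\<lambda>_. 0) \<in> R" by (simp add: R_def)
  hence ne: "sp_obj v n ` R \<noteq> {}" by blast
  obtain c where cR: "c \<in> R" and cmax: "sp_obj v n c = Max (sp_obj v n ` R)"
    using Max_in[OF finite_imageI[OF fR] ne] by auto
  have "sp_optimal v n c"
    unfolding sp_optimal_def
  proof (intro conjI allI impI)
    show "sp_feasible n CARD('d) c" using cR by (auto simp: R_def sp_feasible_def)
    fix c' assume "sp_feasible n CARD('d) c'"
    hence "(\<lambda>i. if i < n then c' i else 0) \<in> R" by (auto simp: R_def sp_feasible_def)
    hence "sp_obj v n (\<lambda>i. if i < n then c' i else 0) \<le> sp_obj v n c"
      unfolding cmax using fR by (intro Max_ge) auto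
    thus "sp_obj v n c' \<le> sp_obj v n c" by (simp add: sp_obj_restrict)
  qed
  thus "\<exists>c. sp_optimal v n c" by blast
next
  show "\<forall>c. sp_optimal v n c \<longrightarrow>
       (\<exists>x. cc_optimal (gram v) n x \<and> (\<forall>i<n. \<forall>j<n. x i = x j \<longleftrightarrow> c i = c j))"
  proof (intro allI impI)
    fix c assume opt: "sp_optimal v n c"
    define x where "x = (\<lambda>i. LEAST j. c j = c i)"
    have xeq: "\<forall>i<n. \<forall>j<n. x i = x j \<longleftrightarrow> c i = c j"
    proof (intro allI impI iffI)
      fix i j assume "x i = x j"
      moreover have "c (x i) = c i" "c (x j) = c j" unfolding x_def by (auto intro: LeastI)
      ultimately show "c i = c j" by metis
    qed (simp add: x_def)
    have feas: "cc_feasible n x"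
      unfolding cc_feasible_def x_def by (auto intro: le_less_trans[OF Least_le])
    define D where "D = (\<Sum>i<n. inner (v i) (v i))"
    have cfe: "sp_feasible n CARD('d) c" using opt by (simp add: sp_optimal_def)
    have "cc_optimal (gram v) n x"
      unfolding cc_optimal_def
    proof (intro conjI allI impI feas)
      fix y assume "cc_feasible n y"
      obtain c' where c': "sp_feasible n CARD('d) c'" "cc_obj (gram v) n y \<le> cc_obj (gram v) n c'"
        using M by blast
      have "sp_obj v n c' \<le> sp_obj v n c" using opt c'(1) by (simp add: sp_optimal_def)
      hence "cc_obj (gram v) n c' \<le> cc_obj (gram v) n c"
        using sp_cc[OF c'(1), of v] sp_cc[OF cfe, of v] by simp
      also have "\<dots> = cc_obj (gram v) n x" using cc_eq[OF xeq] by simp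
      finally show "cc_obj (gram v) n y \<le> cc_obj (gram v) n x" using c'(2) by simp
    qed
    thus "\<exists>x. cc_optimal (gram v) n x \<and> (\<forall>i<n. \<forall>j<n. x i = x j \<longleftrightarrow> c i = c j)"
      using xeq by blast
  qed
qed

end
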